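(* For every tree $T=(V,E)$ of order at least $3$, $$\sum_{uv\in E}|d(u)-d(v)| \;\ge\; \sum_{v\in V}(d(v)-2)^2 + 2(\Delta(T)-2).$$
   Context: $d(v)$ denotes the degree of a vertex $v$ in $T$, and $\Delta(T)$ is the maximum degree of $T$. *)

theory Defs
  imports Main
begin

definition simple_graph :: "'a set \<Rightarrow> 'a set set \<Rightarrow> bool" where
  "simple_graph V E \<longleftrightarrow> finite V \<and> (\<forall>e\<in>E. e \<subseteq> V \<and> card e = 2)"

definition is_walk :: "'a set \<Rightarrow> 'a set set \<Rightarrow> 'a list \<Rightarrow> bool" where
  "is_walk V E p \<longleftrightarrow> p \<noteq> [] \<and> set p \<subseteq> V \<and>
     (\<forall>i. Suc i < length p \<longrightarrow> {p ! i, p ! Suc i} \<in> E)"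

definition connected_graph :: "'a set \<Rightarrow> 'a set set \<Rightarrow> bool" where
  "connected_graph V E \<longleftrightarrow>
     (\<forall>u\<in>V. \<forall>v\<in>V. \<exists>p. is_walk V E p \<and> hd p = u \<and> last p = v)"

definition is_cycle :: "'a set \<Rightarrow> 'a set set \<Rightarrow> 'a list \<Rightarrow> bool" where
  "is_cycle V E c \<longleftrightarrow> length c \<ge> 3 \<and> distinct c \<and> is_walk V E c \<and> {last c, hd c} \<in> E"

definition acyclic_graph :: "'a set \<Rightarrow> 'a set set \<Rightarrow> bool" where
  "acyclic_graph V E \<longleftrightarrow> \<not> (\<exists>c. is_cycle V E c)"

definition is_tree :: "'a set \<Rightarrow> 'a set set \<Rightarrow> bool" where
  "is_tree V E \<longleftrightarrow> simple_graph V E \<and> V \<noteq> {} \<and> connected_graph V E \<and> acyclic_graph V E"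

definition degree :: "'a set set \<Rightarrow> 'a \<Rightarrow> nat" where
  "degree E v = card {e\<in>E. v \<in> e}"

definition max_degree :: "'a set \<Rightarrow> 'a set set \<Rightarrow> nat" where
  "max_degree V E = Max (degree E ` V)"

end

theory Submission
  imports Defs
begin

lemma finite_E: "simple_graph V E \<Longrightarrow> finite E"
  unfolding simple_graph_def
  by (meson Pow_iff finite_Pow_iff rev_finite_subset subsetI)

lemma edge2: "simple_graph V E \<Longrightarrow> e \<in> E \<Longrightarrow> \<exists>a b. e = {a,b} \<and> a \<noteq> b \<and> a \<in> V \<and> b \<in> V"
  unfolding simple_graph_def by (metis card_2_iff insert_subset)

lemma handshake:
  fixes h :: "'a \<Rightarrow> int"
  assumes "simple_graph V E"
  shows "(\<Sum>v\<in>V. int (degree E v) * h v) = (\<Sum>e\<in>E. \<Sum>v\<in>e. h v)"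
proof -
  have fV: "finite V" using assms unfolding simple_graph_def by blast
  have fE: "finite E" using assms finite_E by blast
  have "\<And>v. int (degree E v) * h v = (\<Sum>e\<in>E. if v \<in> e then h v else 0)"
  proof -
    fix v
    have "int (degree E v) = (\<Sum>e\<in>{e\<in>E. v\<in>e}. 1)" unfolding degree_def by simp
    also have "\<dots> = (\<Sum>e\<in>E. if v \<in> e then 1 else 0)" by (rule sum.inter_filter[OF fE])
    finally have "int (degree E v) * h v = (\<Sum>e\<in>E. (if v \<in> e then 1 else 0) * h v)"
      by (simp add: sum_distrib_right)
    also have "\<dots> = (\<Sum>e\<in>E. if v \<in> e then h v else 0)"
      by (rule sum.cong) auto
    finally show "int (degree E v) * h v = (\<Sum>e\<in>E. if v \<in> e then h v else 0)" .
  qed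
  then have "(\<Sum>v\<in>V. int (degree E v) * h v) = (\<Sum>v\<in>V. \<Sum>e\<in>E. if v \<in> e then h v else 0)" by simp
  also have "\<dots> = (\<Sum>e\<in>E. \<Sum>v\<in>V. if v \<in> e then h v else 0)" by (rule sum.swap)
  also have "\<dots> = (\<Sum>e\<in>E. \<Sum>v\<in>{v\<in>V. v\<in>e}. h v)" 
    by (rule sum.cong[OF refl], rule sum.inter_filter[OF fV, symmetric])
  also have "\<dots> = (\<Sum>e\<in>E. \<Sum>v\<in>e. h v)"
  proof (rule sum.cong)
    fix e assume "e \<in> E"
    then have "e \<subseteq> V" using assms unfolding simple_graph_def by blast
    then have "{v\<in>V. v\<in>e} = e" by blast
    then show "(\<Sum>v\<in>{v\<in>V. v\<in>e}. h v) = (\<Sum>v\<in>e. h v)" by simp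
  qed simp
  finally show ?thesis .
qed


lemma walk_tl:
  assumes "is_walk V E p" "length p \<ge> 2"
  shows "is_walk V E (tl p)"
proof -
  have "tl p \<noteq> []" using assms(2) by (cases p) auto
  moreover have "set (tl p) \<subseteq> V" using assms(1) unfolding is_walk_def
    by (meson list.set_sel(2) subset_code(1) subset_iff)
  moreover have "\<forall>i. Suc i < length (tl p) \<longrightarrow> {tl p ! i, tl p ! Suc i} \<in> E"
    using assms(1) unfolding is_walk_def by (simp add: nth_tl)
  ultimately show ?thesis unfolding is_walk_def by blast
qed

lemma conn_card:
  assumes sg: "simple_graph V E" and con: "connected_graph V E" and wV: "w \<in> V"
  shows "card V \<le> card E + 1"
proof -
  define P where "P v k \<longleftrightarrow> (\<exists>p. is_walk V E p \<and> hd p = v \<and> last p = w \<and> length p = Suc k)" for v k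
  define dist where "dist v = (LEAST k. P v k)" for v
  have ex: "\<exists>k. P v k" if vV: "v \<in> V" for v
  proof -
    obtain p where p: "is_walk V E p" "hd p = v" "last p = w"
      using con wV vV unfolding connected_graph_def by meson
    then obtain k where "length p = Suc k" unfolding is_walk_def by (cases p) auto
    then have "P v k" using p unfolding P_def by blast
    then show ?thesis by blast
  qed
  have nx: "\<exists>u. {v,u} \<in> E \<and> dist u < dist v" if "v \<in> V" "v \<noteq> w" for v
  proof -
    have "P v (dist v)" unfolding dist_def using ex[OF that(1)] by (rule LeastI_ex)
    then obtain p where p: "is_walk V E p" "hd p = v" "last p = w" "length p = Suc (dist v)"
      unfolding P_def by blast
    have l2: "length p \<ge> 2"
    proof (rule ccontr)
      assume "\<not> 2 \<le> length p"
      then have "length p = 1" using p(4) by simp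
      then obtain x where "p = [x]" by (cases p) auto
      then show False using p that by simp
    qed
    have e: "{v, p!1} \<in> E" using p(1,2) l2 unfolding is_walk_def
      by (metis One_nat_def Suc_1 Suc_le_lessD hd_conv_nth less_imp_le_nat list.size(3) not_one_le_zero)
    have wt: "is_walk V E (tl p)" using walk_tl p(1) l2 by blast
    have "tl p \<noteq> []" using l2 by (cases p) auto
    then have "hd (tl p) = p!1" by (cases p) (auto simp: hd_conv_nth)
    moreover have "last (tl p) = w" using l2 p(3) by (cases p) auto
    moreover have "length (tl p) = Suc (dist v - 1)" using l2 p(4) by simp
    ultimately have "P (p!1) (dist v - 1)" unfolding P_def using wt by blast
    then have "dist (p!1) \<le> dist v - 1" unfolding dist_def by (rule Least_le)
    moreover have "dist v \<ge> 1" using l2 p(4) by simp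
    ultimately have "dist (p!1) < dist v" by simp
    then show ?thesis using e by blast
  qed
  then have "\<forall>v\<in>V - {w}. \<exists>u. {v,u} \<in> E \<and> dist u < dist v" by blast
  then obtain nxt where nxt0: "\<forall>v\<in>V - {w}. {v, nxt v} \<in> E \<and> dist (nxt v) < dist v"
    by (metis bchoice)
  have nxt: "{v, nxt v} \<in> E \<and> dist (nxt v) < dist v" if "v \<in> V - {w}" for v
    using nxt0 that by blast
  define g where "g v = {v, nxt v}" for v
  have inj: "inj_on g (V - {w})"
  proof (rule inj_onI)
    fix x y assume x: "x \<in> V - {w}" and y: "y \<in> V - {w}" and gxy: "g x = g y"
    show "x = y"
    proof (rule ccontr)
      assume "x \<noteq> y"
      then have "x = nxt y" "y = nxt x" using gxy unfolding g_def by (auto simp: doubleton_eq_iff)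
      then show False using nxt[OF x] nxt[OF y] by simp
    qed
  qed
  have "g ` (V - {w}) \<subseteq> E" using nxt unfolding g_def by blast
  then have "card (V - {w}) \<le> card E" using card_inj_on_le[OF inj] finite_E[OF sg] by blast
  moreover have "card (V - {w}) = card V - 1" using wV by simp
  ultimately show ?thesis by simp
qed


lemma walk_rev:
  assumes "is_walk V E p"
  shows "is_walk V E (rev p)"
proof -
  have "{rev p ! i, rev p ! Suc i} \<in> E" if "Suc i < length p" for i
  proof -
    define k where "k = length p - Suc (Suc i)"
    have k: "Suc k < length p" "Suc k = length p - Suc i" using that unfolding k_def by auto
    have "{p ! k, p ! Suc k} \<in> E" using assms k(1) unfolding is_walk_def by blast
    moreover have "rev p ! i = p ! Suc k" using k that by (simp add: rev_nth)
    moreover have "rev p ! Suc i = p ! k" using that unfolding k_def by (simp add: rev_nth)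
    ultimately show ?thesis by (simp add: insert_commute)
  qed
  then show ?thesis using assms unfolding is_walk_def by auto
qed

lemma maxpath_hd_leaf:
  assumes sg: "simple_graph V E" and ac: "acyclic_graph V E"
    and pw: "is_walk V E p" and pd: "distinct p" and l2: "length p \<ge> 2"
    and mx: "\<And>q. is_walk V E q \<Longrightarrow> distinct q \<Longrightarrow> length q \<le> length p"
    and eE: "e \<in> E" and he: "hd p \<in> e"
  shows "e = {p!0, p!1}"
proof -
  have h0: "hd p = p!0" using l2 by (cases p) auto
  obtain y where ey: "e = {hd p, y}" "y \<noteq> hd p" "y \<in> V"
    using edge2[OF sg eE] he by blast
  show ?thesis
  proof (cases "y = p!1")
    case True then show ?thesis using ey h0 by simp
  next
    case y1: False
    show ?thesis
    proof (cases "y \<in> set p")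
      case False
      have "is_walk V E (y # p)"
        unfolding is_walk_def
      proof (intro conjI allI impI)
        show "set (y # p) \<subseteq> V" using pw ey(3) unfolding is_walk_def by auto
      next
        fix i assume i: "Suc i < length (y # p)"
        show "{(y # p) ! i, (y # p) ! Suc i} \<in> E"
        proof (cases i)
          case 0 then show ?thesis using eE ey h0 by (simp add: insert_commute)
        next
          case (Suc j) then show ?thesis using pw i unfolding is_walk_def by auto
        qed
      qed simp
      moreover have "distinct (y # p)" using pd False by simp
      ultimately have "length (y # p) \<le> length p" using mx by blast
      then show ?thesis by simp
    next
      case True
      then obtain j where j: "j < length p" "y = p ! j" by (metis in_set_conv_nth)
      have "j \<noteq> 0" using j ey h0 by (metis)
      moreover have "j \<noteq> 1" using j y1 by auto
      ultimately have j2: "j \<ge> 2" by simp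
      define c where "c = take (Suc j) p"
      have lc: "length c = Suc j" using j unfolding c_def by simp
      have cn: "\<And>i. i < Suc j \<Longrightarrow> c ! i = p ! i" unfolding c_def by simp
      have "is_walk V E c" unfolding is_walk_def
      proof (intro conjI allI impI)
        show "c \<noteq> []" using lc by auto
        show "set c \<subseteq> V" using pw unfolding c_def is_walk_def by (meson order_trans set_take_subset)
        fix i assume "Suc i < length c"
        then show "{c ! i, c ! Suc i} \<in> E" using lc cn pw j unfolding is_walk_def by auto
      qed
      moreover have "distinct c" using pd unfolding c_def by simp
      moreover have "last c = y" using lc cn j by (metis diff_Suc_1 last_conv_nth lessI list.size(3) nat.distinct(1))
      moreover have "hd c = hd p" using lc cn h0 by (metis hd_conv_nth list.size(3) nat.distinct(1) zero_less_Suc)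
      ultimately have "is_cycle V E c" unfolding is_cycle_def using lc j2 eE ey
        by (simp add: insert_commute)
      then show ?thesis using ac unfolding acyclic_graph_def by blast
    qed
  qed
qed


lemma leaf_exists:
  assumes sg: "simple_graph V E" and ac: "acyclic_graph V E" and ne: "E \<noteq> {}"
  shows "\<exists>l e0. e0 \<in> E \<and> l \<in> e0 \<and> l \<noteq> w \<and> (\<forall>e\<in>E. l \<in> e \<longrightarrow> e = e0)"
proof -
  define S where "S = {q. is_walk V E q \<and> distinct q}"
  have fV: "finite V" using sg unfolding simple_graph_def by blast
  have bd: "length q \<le> card V" if "q \<in> S" for q
  proof -
    have "length q = card (set q)" using that unfolding S_def by (simp add: distinct_card)
    also have "\<dots> \<le> card V" using that fV unfolding S_def is_walk_def by (simp add: card_mono)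
    finally show ?thesis .
  qed
  obtain e where eE: "e \<in> E" using ne by blast
  then obtain a b where ab: "e = {a,b}" "a \<noteq> b" "a \<in> V" "b \<in> V" using edge2[OF sg] by blast
  have abS: "[a,b] \<in> S" unfolding S_def is_walk_def using ab eE
    by (auto simp: less_Suc_eq)
  have fin: "finite (length ` S)" using bd by (meson finite_atMost finite_subset image_subsetI atMost_iff)
  have "Max (length ` S) \<in> length ` S" using fin abS by (intro Max_in) auto
  then obtain p where pS: "p \<in> S" and lp: "length p = Max (length ` S)" by auto
  have mx: "\<And>q. is_walk V E q \<Longrightarrow> distinct q \<Longrightarrow> length q \<le> length p"
    unfolding lp using fin S_def by (simp add: Max_ge)
  have l2: "length p \<ge> 2" using mx[of "[a,b]"] abS unfolding S_def by auto
  have pw: "is_walk V E p" and pd: "distinct p" using pS unfolding S_def by auto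
  have L1: "\<forall>e\<in>E. hd p \<in> e \<longrightarrow> e = {p!0, p!1}"
    using maxpath_hd_leaf[OF sg ac pw pd l2 mx] by blast
  have L2: "\<forall>e\<in>E. hd (rev p) \<in> e \<longrightarrow> e = {rev p!0, rev p!1}"
  proof -
    have mx': "\<And>q. is_walk V E q \<Longrightarrow> distinct q \<Longrightarrow> length q \<le> length (rev p)" using mx by simp
    have "distinct (rev p)" "2 \<le> length (rev p)" using pd l2 by auto
    then show ?thesis using maxpath_hd_leaf[OF sg ac walk_rev[OF pw] _ _ mx'] by blast
  qed
  have e1: "{p!0, p!1} \<in> E" using pw l2 unfolding is_walk_def by auto
  have e2: "{rev p!0, rev p!1} \<in> E" using walk_rev[OF pw] l2 unfolding is_walk_def by auto
  have h1: "hd p \<in> {p!0, p!1}" using l2 by (cases p) auto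
  have h2: "hd (rev p) \<in> {rev p!0, rev p!1}" using l2 by (cases "rev p") auto
  have "hd p \<noteq> hd (rev p)"
  proof -
    have pne: "p \<noteq> []" using l2 by auto
    have "hd p = p ! 0" using pne by (simp add: hd_conv_nth)
    moreover have "hd (rev p) = p ! (length p - 1)" using pne by (simp add: hd_rev last_conv_nth)
    ultimately have "hd p = p ! 0" "hd (rev p) = p ! (length p - 1)" by auto
    moreover have "p ! 0 \<noteq> p ! (length p - 1)" using nth_eq_iff_index_eq[OF pd, of 0 "length p - 1"] l2 pne by simp
    ultimately show ?thesis by simp
  qed
  then show ?thesis
  proof (cases "hd p = w")
    case True
    then show ?thesis using L2 e2 h2 \<open>hd p \<noteq> hd (rev p)\<close> by metis
  next
    case False
    then show ?thesis using L1 e1 h1 by metis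
  qed
qed

lemma forest_inj:
  assumes "simple_graph V E" and "acyclic_graph V E"
  shows "\<exists>f. inj_on f E \<and> (\<forall>e\<in>E. f e \<in> e \<and> f e \<noteq> w)"
  using assms
proof (induction "card E" arbitrary: E)
  case 0
  have "finite E" using finite_E[OF "0.prems"(1)] .
  then have "E = {}" using "0.hyps" by simp
  then show ?case by auto
next
  case (Suc m)
  have "E \<noteq> {}" using Suc.hyps(2) by auto
  then obtain l e0 where le: "e0 \<in> E" "l \<in> e0" "l \<noteq> w" "\<forall>e\<in>E. l \<in> e \<longrightarrow> e = e0"
    using leaf_exists[OF Suc.prems(1) Suc.prems(2), of w] by blast
  define E' where "E' = E - {e0}"
  have fE: "finite E" using finite_E Suc.prems(1) by blast
  have cE: "m = card E'" using Suc.hyps(2) le(1) fE unfolding E'_def by simp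
  have sg': "simple_graph V E'" using Suc.prems(1) unfolding simple_graph_def E'_def by auto
  have wm: "is_walk V E' c \<Longrightarrow> is_walk V E c" for c unfolding is_walk_def E'_def by auto
  have ac': "acyclic_graph V E'" unfolding acyclic_graph_def
  proof
    assume "\<exists>c. is_cycle V E' c"
    then obtain c where c: "is_cycle V E' c" by blast
    then have "is_cycle V E c" unfolding is_cycle_def using wm[of c] by (auto simp: E'_def)
    then show False using Suc.prems(2) unfolding acyclic_graph_def by blast
  qed
  obtain f where f: "inj_on f E'" "\<forall>e\<in>E'. f e \<in> e \<and> f e \<noteq> w"
    using Suc.hyps(1)[OF cE sg' ac'] by blast
  define g where "g = f(e0 := l)"
  have nl: "\<forall>e\<in>E'. f e \<noteq> l" using f(2) le(4) unfolding E'_def by auto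
  have "inj_on g E"
  proof (rule inj_onI)
    fix x y assume x: "x \<in> E" and y: "y \<in> E" and gxy: "g x = g y"
    show "x = y"
    proof (cases "x = e0")
      case True
      show ?thesis
      proof (rule ccontr)
        assume "x \<noteq> y"
        then have "y \<in> E'" "g y = f y" using True y unfolding E'_def g_def by auto
        moreover have "g x = l" using True unfolding g_def by simp
        ultimately show False using nl gxy by auto
      qed
    next
      case xF: False
      show ?thesis
      proof (cases "y = e0")
        case True
        then have "x \<in> E'" "g x = f x" "g y = l" using xF x unfolding E'_def g_def by auto
        then show ?thesis using nl gxy by auto
      next
        case False
        then have "x \<in> E'" "y \<in> E'" "g x = f x" "g y = f y" using xF x y unfolding E'_def g_def by auto
        then show ?thesis using f(1) gxy unfolding inj_on_def by auto
      qed
    qed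
  qed
  moreover have "\<forall>e\<in>E. g e \<in> e \<and> g e \<noteq> w"
  proof
    fix e assume eE: "e \<in> E"
    show "g e \<in> e \<and> g e \<noteq> w"
    proof (cases "e = e0")
      case True
      then show ?thesis using le(2,3) unfolding g_def by simp
    next
      case False
      then have "e \<in> E'" "g e = f e" using eE unfolding E'_def g_def by auto
      then show ?thesis using f(2) by simp
    qed
  qed
  ultimately show ?case by blast
qed


lemma edge_ineq:
  fixes d :: "'a \<Rightarrow> int"
  assumes "e = {a,b}" "a \<noteq> b" "x \<in> e"
  shows "(\<Sum>u\<in>e. \<Sum>v\<in>e. \<bar>d u - d v\<bar>) + 4 * d x \<ge> 2 * (\<Sum>v\<in>e. d v)"
proof -
  have "(\<Sum>u\<in>e. \<Sum>v\<in>e. \<bar>d u - d v\<bar>) = 2 * \<bar>d a - d b\<bar>" using assms(1,2) by (simp add: abs_minus_commute)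
  moreover have "(\<Sum>v\<in>e. d v) = d a + d b" using assms(1,2) by simp
  moreover have "x = a \<or> x = b" using assms(1,3) by simp
  ultimately show ?thesis by (smt (verit))
qed

theorem theorem4:
  fixes V :: "'a set" and E :: "'a set set"
  assumes "is_tree V E" and "card V \<ge> 3"
  shows "(\<Sum>e\<in>E. \<Sum>u\<in>e. \<Sum>v\<in>e. \<bar>int (degree E u) - int (degree E v)\<bar>)
         \<ge> 2 * ((\<Sum>v\<in>V. (int (degree E v) - 2)^2) + 2 * (int (max_degree V E) - 2))"
proof -
  define d where "d v = int (degree E v)" for v
  have sg: "simple_graph V E" and ac: "acyclic_graph V E" and con: "connected_graph V E"
    and ne: "V \<noteq> {}" using assms(1) unfolding is_tree_def by auto
  have fV: "finite V" using sg unfolding simple_graph_def by blast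
  have fE: "finite E" using sg finite_E by blast
  have "max_degree V E \<in> degree E ` V" unfolding max_degree_def using fV ne by (intro Max_in) auto
  then obtain w where wV: "w \<in> V" and dw: "int (max_degree V E) = d w" unfolding d_def by auto
  obtain f where f: "inj_on f E" "\<forall>e\<in>E. f e \<in> e \<and> f e \<noteq> w" using forest_inj[OF sg ac] by blast
  have cc: "card V \<le> card E + 1" using conn_card[OF sg con wV] .
  have h1: "(\<Sum>v\<in>V. d v) = 2 * int (card E)"
  proof -
    have "(\<Sum>v\<in>V. d v) = (\<Sum>v\<in>V. int (degree E v) * 1)" unfolding d_def by simp
    also have "\<dots> = (\<Sum>e\<in>E. \<Sum>v\<in>e. (1::int))" by (rule handshake[OF sg])
    also have "\<dots> = (\<Sum>e\<in>E. 2)"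
    proof (rule sum.cong)
      fix e assume "e \<in> E" then show "(\<Sum>v\<in>e. (1::int)) = 2" using sg unfolding simple_graph_def by simp
    qed simp
    finally show ?thesis by simp
  qed
  have h2: "(\<Sum>v\<in>V. d v * d v) = (\<Sum>e\<in>E. \<Sum>v\<in>e. d v)"
    unfolding d_def by (rule handshake[OF sg])
  have per: "\<forall>e\<in>E. (\<Sum>u\<in>e. \<Sum>v\<in>e. \<bar>d u - d v\<bar>) + 4 * d (f e) \<ge> 2 * (\<Sum>v\<in>e. d v)"
  proof
    fix e assume eE: "e \<in> E"
    then obtain a b where "e = {a,b}" "a \<noteq> b" using edge2[OF sg] by blast
    then show "(\<Sum>u\<in>e. \<Sum>v\<in>e. \<bar>d u - d v\<bar>) + 4 * d (f e) \<ge> 2 * (\<Sum>v\<in>e. d v)"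
      by (rule edge_ineq) (use f(2) eE in auto)
  qed
  have s1: "(\<Sum>e\<in>E. \<Sum>u\<in>e. \<Sum>v\<in>e. \<bar>d u - d v\<bar>) + 4 * (\<Sum>e\<in>E. d (f e)) \<ge> 2 * (\<Sum>v\<in>V. d v * d v)"
  proof -
    have "2 * (\<Sum>v\<in>V. d v * d v) = (\<Sum>e\<in>E. 2 * (\<Sum>v\<in>e. d v))" unfolding h2 by (simp add: sum_distrib_left)
    also have "\<dots> \<le> (\<Sum>e\<in>E. (\<Sum>u\<in>e. \<Sum>v\<in>e. \<bar>d u - d v\<bar>) + 4 * d (f e))"
      using per by (intro sum_mono) auto
    also have "\<dots> = (\<Sum>e\<in>E. \<Sum>u\<in>e. \<Sum>v\<in>e. \<bar>d u - d v\<bar>) + 4 * (\<Sum>e\<in>E. d (f e))"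
      by (simp add: sum.distrib sum_distrib_left)
    finally show ?thesis .
  qed
  have s2: "(\<Sum>e\<in>E. d (f e)) \<le> (\<Sum>v\<in>V. d v) - d w"
  proof -
    have "(\<Sum>e\<in>E. d (f e)) = (\<Sum>v\<in>f ` E. d v)" using f(1) by (simp add: sum.reindex)
    also have "\<dots> \<le> (\<Sum>v\<in>V - {w}. d v)"
    proof (rule sum_mono2)
      show "finite (V - {w})" using fV by simp
      show "f ` E \<subseteq> V - {w}" using f(2) sg unfolding simple_graph_def by blast
      show "\<And>b. b \<in> V - {w} - f ` E \<Longrightarrow> 0 \<le> d b" unfolding d_def by simp
    qed
    also have "\<dots> = (\<Sum>v\<in>V. d v) - d w" using fV wV by (simp add: sum_diff1)
    finally show ?thesis .
  qed
  have s3: "(\<Sum>v\<in>V. (d v - 2)^2) = (\<Sum>v\<in>V. d v * d v) - 4 * (\<Sum>v\<in>V. d v) + 4 * int (card V)"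
  proof -
    have "(\<Sum>v\<in>V. (d v - 2)^2) = (\<Sum>v\<in>V. d v * d v - 4 * d v + 4)"
      by (simp add: power2_eq_square algebra_simps)
    also have "\<dots> = (\<Sum>v\<in>V. d v * d v) - 4 * (\<Sum>v\<in>V. d v) + 4 * int (card V)"
      by (simp add: sum.distrib sum_subtractf sum_distrib_left)
    finally show ?thesis .
  qed
  have "(\<Sum>e\<in>E. \<Sum>u\<in>e. \<Sum>v\<in>e. \<bar>d u - d v\<bar>)
         \<ge> 2 * ((\<Sum>v\<in>V. (d v - 2)^2) + 2 * (d w - 2))"
  proof -
    have "int (card V) \<le> int (card E) + 1" using cc by simp
    then show ?thesis using s1 s2 s3 h1 by (smt (verit))
  qed
  then show ?thesis unfolding d_def dw[unfolded d_def] .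
qed

end
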